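(* Let $n>1$ and $m$ be positive integers, and let $\mathbf{u}\in\mathbb{R}^n$ be a fixed vector. Let $\mathbf{R}\in\mathbb{R}^{m\times n}$ be a random matrix such that either (i) its rows $\mathbf{R}_i$ are i.i.d. samples from an isotropic distribution $P$ on $\mathbb{R}^n$, or (ii) $\hat{\mathbf{R}}$ is a randomly generated matrix with orthogonal rows (uniformly over all rotations). Let $\mathbf{v}=\mathrm{ReLU}\left(\sqrt{2n/m}\cdot\hat{\mathbf{R}}\mathbf{u}\right)$. Then $\mathbb{E}[\lVert\mathbf{v}\rVert^2]=K_n\cdot\lVert\mathbf{u}\rVert^2$, where \[ K_n=\begin{cases}\frac{2S_{n-1}}{S_n}\cdot\left(\frac{2}{3}\cdot\frac{4}{5}\cdots\frac{n-2}{n-1}\right) & \text{if } n \text{ is even},\\[4pt] \frac{2S_{n-1}}{S_n}\cdot\left(\frac{1}{2}\cdot\frac{3}{4}\cdots\frac{n-2}{n-1}\right)\cdot\frac{\pi}{2} & \text{otherwise},\end{cases} \] and $S_n$ denotes the surface area of a unit $n$-dimensional sphere (empty products are equal to $1$).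
   Context: For a matrix $\mathbf{R}$ with nonzero rows $\mathbf{R}_i$, $\hat{\mathbf{R}}$ denotes the matrix whose $i$-th row is $\hat{\mathbf{R}}_i=\mathbf{R}_i/\lVert\mathbf{R}_i\rVert_2$ (each row normalized to unit Euclidean norm). A distribution $P$ on $\mathbb{R}^n$ is isotropic if it is invariant under all orthogonal transformations of $\mathbb{R}^n$ (all directions equally likely), with no mass at the origin. In case (ii), "randomly generated with orthogonal rows" means $\hat{\mathbf{R}}$ has orthonormal rows (so $m\le n$) and its distribution is uniform over all rotations (Haar-distributed). $\mathrm{ReLU}$ is applied coordinatewise, $\mathrm{ReLU}(x)=\max(0,x)$. *)

theory Defs
  imports "HOL-Probability.Probability"
begin

definition rownormalize :: "real^'n^'m \<Rightarrow> real^'n^'m" where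
  "rownormalize R = (\<chi> i. (1 / norm (R $ i)) *\<^sub>R (R $ i))"

definition relu_vec :: "real^'m \<Rightarrow> real^'m" where
  "relu_vec x = (\<chi> i. max 0 (x $ i))"

definition isotropic :: "(real^'n) measure \<Rightarrow> bool" where
  "isotropic P \<longleftrightarrow> prob_space P \<and> sets P = sets borel \<and>
     (\<forall>f. orthogonal_transformation f \<longrightarrow> distr P borel f = P) \<and>
     emeasure P {0} = 0"

definition orthonormal_rows :: "real^'n^'m \<Rightarrow> bool" where
  "orthonormal_rows A \<longleftrightarrow> (\<forall>i j. (A $ i) \<bullet> (A $ j) = (if i = j then 1 else 0))"

text \<open>Surface area of the unit n-dimensional sphere S^n (in R^(n+1)).\<close>
definition sphere_area :: "nat \<Rightarrow> real" where
  "sphere_area n = 2 * pi powr ((real n + 1) / 2) / Gamma ((real n + 1) / 2)"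

definition K_const :: "nat \<Rightarrow> real" where
  "K_const n =
     (if even n then
        2 * sphere_area (n - 1) / sphere_area n *
          (\<Prod>k\<in>{1..(n - 2) div 2}. real (2 * k) / real (2 * k + 1))
      else
        2 * sphere_area (n - 1) / sphere_area n *
          (\<Prod>k\<in>{1..(n - 1) div 2}. real (2 * k - 1) / real (2 * k)) * (pi / 2))"

end

theory Submission
  imports Defs
begin


lemma Gp1: "(x::real) > 0 \<Longrightarrow> Gamma (x + 1) = x * Gamma x"
  by (rule Gamma_plus1) (auto dest: nonpos_Ints_nonpos)

lemma prod_even: "(\<Prod>j\<in>{1..k}. real (2*j) / real (2*j+1)) = Gamma (real k + 1) * sqrt pi / (2 * Gamma (real k + 3/2))"
proof (induction k)
  case 0
  have "Gamma (3/2::real) = 1/2 * Gamma (1/2)" using Gp1[of "1/2"] by simp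
  then have G: "Gamma (3/2::real) = sqrt pi / 2" by (simp add: Gamma_one_half_real)
  have z: "real 0 + 3/2 = (3/2::real)" "real 0 + 1 = (1::real)" by simp_all
  show ?case unfolding z G by simp
next
  case (Suc k)
  have eqa: "real (Suc k) + 1 = (real k + 1) + 1" by simp
  have a': "Gamma (real (Suc k) + 1) = (real k + 1) * Gamma (real k + 1)" unfolding eqa by (rule Gp1) simp
  have eqb: "real (Suc k) + 3/2 = (real k + 3/2) + 1" by simp
  have b': "Gamma (real (Suc k) + 3/2) = (real k + 3/2) * Gamma (real k + 3/2)" unfolding eqb by (rule Gp1) simp
  have p: "Gamma (real k + 3/2) > 0" "Gamma (real k + 1) > 0" by simp_all
  have "(\<Prod>j\<in>{1..Suc k}. real (2*j) / real (2*j+1)) = (\<Prod>j\<in>{1..k}. real (2*j) / real (2*j+1)) * (real (2*k+2) / real (2*k+3))"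
    by (simp add: prod.nat_ivl_Suc')
  also have "\<dots> = Gamma (real (Suc k) + 1) * sqrt pi / (2 * Gamma (real (Suc k) + 3/2))"
    unfolding Suc.IH a' b' using p by (simp add: field_simps)
  finally show ?case .
qed

lemma prod_odd: "(\<Prod>j\<in>{1..k}. real (2*j - 1) / real (2*j)) * (pi/2) = Gamma (real k + 1/2) * sqrt pi / (2 * Gamma (real k + 1))"
proof (induction k)
  case 0
  show ?case by (simp add: Gamma_one_half_real)
next
  case (Suc k)
  have eqa: "real (Suc k) + 1 = (real k + 1) + 1" by simp
  have a': "Gamma (real (Suc k) + 1) = (real k + 1) * Gamma (real k + 1)" unfolding eqa by (rule Gp1) simp
  have eqb: "real (Suc k) + 1/2 = (real k + 1/2) + 1" by simp
  have b': "Gamma (real (Suc k) + 1/2) = (real k + 1/2) * Gamma (real k + 1/2)" unfolding eqb by (rule Gp1) simp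
  have p: "Gamma (real k + 1) > 0" "Gamma (real k + 1/2) > 0" by simp_all
  have "(\<Prod>j\<in>{1..Suc k}. real (2*j - 1) / real (2*j)) * (pi/2) = ((\<Prod>j\<in>{1..k}. real (2*j - 1) / real (2*j)) * (pi/2)) * (real (2*k+1) / real (2*k+2))"
    by (simp add: prod.nat_ivl_Suc')
  also have "\<dots> = Gamma (real (Suc k) + 1/2) * sqrt pi / (2 * Gamma (real (Suc k) + 1))"
    unfolding Suc.IH a' b' using p by (simp add: field_simps)
  finally show ?case .
qed

lemma K_one: assumes "n \<ge> 2" shows "K_const n = 1"
proof (cases "even n")
  case True
  then obtain j where j: "n = 2*j" by blast
  define k where "k = j - 1"
  have n: "n = 2*k+2" using j assms unfolding k_def by simp
  have a1: "(real (n - 1) + 1) / 2 = real k + 1" using n by (simp add: field_simps)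
  have a2: "(real n + 1) / 2 = real k + 3/2" using n by (simp add: field_simps)
  have e32: "real k + 3/2 = (real k + 1) + 1/2" by simp
  have pw: "pi powr (real k + 3/2) = pi powr (real k + 1) * sqrt pi"
    unfolding e32 powr_add by (simp add: powr_half_sqrt)
  have s1: "sphere_area (n-1) = 2 * (pi powr (real k + 1)) / Gamma (real k + 1)"
    unfolding sphere_area_def a1 ..
  have s2: "sphere_area n = 2 * (pi powr (real k + 1) * sqrt pi) / Gamma (real k + 3/2)"
    unfolding sphere_area_def a2 pw ..
  have d: "(n - 2) div 2 = k" using n by simp
  have p1: "Gamma (real k + 1) > 0" "Gamma (real k + 3/2) > 0" "pi powr (real k + 1) > 0" "sqrt pi > 0" by auto
  have p2: "Gamma ((3 + real k * 2) / 2) \<noteq> 0" "Gamma (1 + real k) \<noteq> 0"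
  proof -
    have x: "(3 + real k * 2) / 2 > 0" "1 + real k > 0" by simp_all
    show "Gamma ((3 + real k * 2) / 2) \<noteq> 0" using Gamma_real_pos[OF x(1)] by linarith
    show "Gamma (1 + real k) \<noteq> 0" using Gamma_real_pos[OF x(2)] by linarith
  qed
  have "K_const n = 2 * sphere_area (n - 1) / sphere_area n * (\<Prod>j\<in>{1..k}. real (2*j) / real (2*j+1))"
    unfolding K_const_def using True d by simp
  also have "\<dots> = 1" unfolding prod_even s1 s2 using p1 p2 by (simp add: field_simps)
  finally show ?thesis .
next
  case False
  then obtain k where n: "n = 2*k+1" using oddE by blast
  have a1: "(real (n - 1) + 1) / 2 = real k + 1/2" using n by (simp add: field_simps)
  have a2: "(real n + 1) / 2 = real k + 1" using n by (simp add: field_simps)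
  have pw: "pi powr (real k + 1/2) = pi powr (real k) * sqrt pi"
    unfolding powr_add by (simp add: powr_half_sqrt)
  have s1: "sphere_area (n-1) = 2 * (pi powr (real k) * sqrt pi) / Gamma (real k + 1/2)"
    unfolding sphere_area_def a1 pw ..
  have s2: "sphere_area n = 2 * (pi powr (real k + 1)) / Gamma (real k + 1)"
    unfolding sphere_area_def a2 ..
  have d: "(n - 1) div 2 = k" using n by simp
  have p1: "Gamma (real k + 1) > 0" "Gamma (real k + 1/2) > 0" "pi powr (real k) > 0" "sqrt pi > 0" by auto
  have e: "pi powr (real k + 1) = pi powr real k * pi" by (simp add: powr_add)
  have p2: "Gamma ((1 + real k * 2) / 2) \<noteq> 0" "Gamma (1 + real k) \<noteq> 0"
  proof -
    have x: "(1 + real k * 2) / 2 > 0" "1 + real k > 0" by simp_all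
    show "Gamma ((1 + real k * 2) / 2) \<noteq> 0" using Gamma_real_pos[OF x(1)] by linarith
    show "Gamma (1 + real k) \<noteq> 0" using Gamma_real_pos[OF x(2)] by linarith
  qed
  have q: "sqrt pi * sqrt pi = pi" by simp
  have "K_const n = 2 * sphere_area (n - 1) / sphere_area n * ((\<Prod>j\<in>{1..k}. real (2*j - 1) / real (2*j)) * (pi/2))"
    unfolding K_const_def using False d by simp
  also have "\<dots> = 1" unfolding prod_odd s1 s2 e using p1 p2 q by (simp add: field_simps)
  finally show ?thesis .
qed


lemma vec_meas:
  fixes f :: "'a \<Rightarrow> 'b::euclidean_space^'n"
  assumes "\<And>i. (\<lambda>x. f x $ i) \<in> borel_measurable M"
  shows "f \<in> borel_measurable M"
proof -
  have "\<forall>b\<in>Basis. (\<lambda>x. f x \<bullet> b) \<in> borel_measurable M"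
  proof
    fix b :: "'b^'n" assume "b \<in> Basis"
    then obtain i u where "b = axis i u" "u \<in> Basis" unfolding Basis_vec_def by auto
    then show "(\<lambda>x. f x \<bullet> b) \<in> borel_measurable M"
      by (simp add: inner_axis) (intro borel_measurable_inner assms, simp)
  qed
  then show ?thesis by (rule iffD2[OF borel_measurable_euclidean_space])
qed

lemma nth_meas: "(\<lambda>x::'b::euclidean_space^'n. x $ i) \<in> borel_measurable borel"
  by (intro borel_measurable_continuous_onI linear_continuous_on bounded_linear_vec_nth)

lemma orth_meas:
  fixes f :: "real^'n \<Rightarrow> real^'n"
  shows "orthogonal_transformation f \<Longrightarrow> f \<in> borel_measurable borel"
  by (intro borel_measurable_continuous_onI linear_continuous_on)
     (simp add: linear_conv_bounded_linear[symmetric] orthogonal_transformation_linear)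

lemma orth_sgn:
  fixes f :: "real^'n \<Rightarrow> real^'n"
  shows "orthogonal_transformation f \<Longrightarrow> f (sgn x) = sgn (f x)"
  by (simp add: sgn_div_norm orthogonal_transformation_scaleR orthogonal_transformation_norm)

lemma rn_nth: "rownormalize B $ i = sgn (B $ i)"
  by (simp add: rownormalize_def sgn_div_norm divide_inverse)

lemma rowQ:
  fixes f :: "real^'n \<Rightarrow> real^'n" and B :: "real^'n^'m"
  assumes "linear f"
  shows "(B ** transpose (matrix f)) $ i = f (B $ i)"
proof -
  have "(B ** transpose (matrix f)) $ i = matrix f *v (B $ i)"
    by (simp add: vec_eq_iff matrix_matrix_mult_def matrix_vector_mult_def transpose_def mult.commute)
  also have "\<dots> = f (B $ i)" using matrix_vector_mul(2)[OF assms] by metis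
  finally show ?thesis .
qed

lemma max_mul: assumes "(c::real) \<ge> 0" shows "max 0 (c * t) = c * max 0 t"
proof (cases "t \<ge> 0")
  case True
  then show ?thesis using assms by (simp add: max_def)
next
  case False
  then have "c * t \<le> 0" using mult_nonneg_nonpos[of c t] assms by simp
  then show ?thesis using False by (simp add: max_def)
qed

lemma max_sq: "(c::real) \<ge> 0 \<Longrightarrow> (max 0 (c * t))^2 = c^2 * (max 0 t)^2"
  by (simp add: max_mul power_mult_distrib)

lemma integrand:
  fixes B :: "real^'n^'m" and c :: real
  assumes "c \<ge> 0"
  shows "(norm (relu_vec (c *\<^sub>R (B *v u))))^2 = (\<Sum>i\<in>UNIV. c^2 * (max 0 (B $ i \<bullet> u))^2)"
proof -
  have e: "(B *v u) $ i = B $ i \<bullet> u" for i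
    by (simp add: matrix_vector_mult_def inner_vec_def)
  have p: "relu_vec (c *\<^sub>R (B *v u)) $ i \<bullet> relu_vec (c *\<^sub>R (B *v u)) $ i = c^2 * (max 0 (B $ i \<bullet> u))^2" for i
  proof -
    have "relu_vec (c *\<^sub>R (B *v u)) $ i \<bullet> relu_vec (c *\<^sub>R (B *v u)) $ i = (max 0 (c * (B $ i \<bullet> u)))^2"
      by (simp add: relu_vec_def e power2_eq_square)
    then show ?thesis by (simp add: max_sq[OF assms])
  qed
  show ?thesis
    unfolding power2_norm_eq_inner inner_vec_def[of "relu_vec _"] p ..
qed

lemma key:
  fixes Y :: "'s \<Rightarrow> real^'n" and u :: "real^'n"
  assumes M: "prob_space M" and Ym: "Y \<in> borel_measurable M"
    and Yb: "\<And>\<omega>. norm (Y \<omega>) \<le> 1" and Y1: "AE \<omega> in M. norm (Y \<omega>) = 1"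
    and inv: "\<And>f \<phi>. orthogonal_transformation f \<Longrightarrow> (\<phi> :: real^'n \<Rightarrow> real) \<in> borel_measurable borel \<Longrightarrow>
                (\<integral>\<omega>. \<phi> (f (Y \<omega>)) \<partial>M) = (\<integral>\<omega>. \<phi> (Y \<omega>) \<partial>M)"
  shows "(\<integral>\<omega>. (max 0 (Y \<omega> \<bullet> u))^2 \<partial>M) = (norm u)^2 / (2 * real CARD('n))"
proof -
  interpret prob_space M by fact
  have intg: "integrable M (\<lambda>\<omega>. g (Y \<omega>))"
    if gm: "g \<in> borel_measurable borel" and gb: "\<And>x. norm x \<le> 1 \<Longrightarrow> \<bar>g x\<bar> \<le> B" for g :: "real^'n \<Rightarrow> real" and B
  proof (rule integrable_const_bound[where B=B])
    show "AE \<omega> in M. norm (g (Y \<omega>)) \<le> B" using gb Yb by simp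
    show "(\<lambda>\<omega>. g (Y \<omega>)) \<in> borel_measurable M" using measurable_compose[OF Ym gm] .
  qed
  have sqm: "(\<lambda>x::real^'n. (x \<bullet> v)^2) \<in> borel_measurable borel" for v
    by (intro borel_measurable_continuous_onI continuous_intros)
  have sqb: "\<bar>(x \<bullet> v)^2\<bar> \<le> (norm v)^2" if "norm x \<le> 1" for x v :: "real^'n"
  proof -
    have "\<bar>x \<bullet> v\<bar> \<le> norm x * norm v" by (rule Cauchy_Schwarz_ineq2)
    also have "\<dots> \<le> norm v" using that by (simp add: mult_left_le_one_le)
    finally have "\<bar>x \<bullet> v\<bar>^2 \<le> (norm v)^2" by (rule power_mono[OF _ abs_ge_zero])
    then show ?thesis by simp
  qed
  have intsq: "integrable M (\<lambda>\<omega>. (Y \<omega> \<bullet> v)^2)" for v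
    by (rule intg[OF sqm sqb])
  define h where "h v = (\<integral>\<omega>. (Y \<omega> \<bullet> v)^2 \<partial>M)" for v
  have hinv: "h (f v) = h v" if f: "orthogonal_transformation f" for f v
  proof -
    have "h v = (\<integral>\<omega>. (f (Y \<omega>) \<bullet> f v)^2 \<partial>M)" using f by (simp add: h_def orthogonal_transformation_def)
    also have "\<dots> = (\<integral>\<omega>. (Y \<omega> \<bullet> f v)^2 \<partial>M)" by (rule inv[OF f sqm])
    finally show ?thesis by (simp add: h_def)
  qed
  have hscale: "h (c *\<^sub>R v) = c^2 * h v" for c v by (simp add: h_def power_mult_distrib)
  obtain k :: 'n where True by simp
  let ?e = "\<lambda>j::'n. axis j (1::real)"
  have heq: "h (?e j) = h (?e k)" for j
  proof -
    obtain f where f: "orthogonal_transformation f" "f (?e j) = ?e k"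
      using orthogonal_transformation_exists[of "?e j" "?e k"] by auto
    then show ?thesis using hinv[OF f(1), of "?e j"] by simp
  qed
  have hsum: "(\<Sum>j\<in>UNIV. h (?e j)) = 1"
  proof -
    have "(\<Sum>j\<in>UNIV. h (?e j)) = (\<integral>\<omega>. (\<Sum>j\<in>UNIV. (Y \<omega> \<bullet> ?e j)^2) \<partial>M)"
      unfolding h_def by (rule Bochner_Integration.integral_sum[where I=UNIV and M=M and f="\<lambda>j \<omega>. (Y \<omega> \<bullet> axis j 1)^2", symmetric]) (rule intsq)
    also have "\<dots> = (\<integral>\<omega>. (norm (Y \<omega>))^2 \<partial>M)"
    proof (rule Bochner_Integration.integral_cong[OF refl])
      fix \<omega>
      have ax: "Y \<omega> \<bullet> axis j 1 = Y \<omega> $ j" for j by (simp add: inner_axis)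
      have nn: "(norm (Y \<omega>))^2 = (\<Sum>j\<in>UNIV. (Y \<omega> $ j)^2)"
        unfolding power2_norm_eq_inner inner_vec_def by (simp add: power2_eq_square)
      show "(\<Sum>j\<in>UNIV. (Y \<omega> \<bullet> axis j 1)^2) = (norm (Y \<omega>))^2" unfolding ax nn ..
    qed
    also have "\<dots> = (\<integral>\<omega>. 1 \<partial>M)"
      by (rule integral_cong_AE) (use Ym Y1 in auto)
    also have "\<dots> = 1" using prob_space.prob_space[OF M] by simp
    finally show ?thesis .
  qed
  have hk: "real CARD('n) * h (?e k) = 1"
  proof -
    have "(\<Sum>j\<in>(UNIV::'n set). h (?e j)) = (\<Sum>j\<in>(UNIV::'n set). h (?e k))"
      by (intro sum.cong refl heq)
    then show ?thesis using hsum by simp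
  qed
  have hu: "h u = (norm u)^2 * h (?e k)"
  proof -
    obtain f where f: "orthogonal_transformation f" "f u = norm u *\<^sub>R ?e k"
      using orthogonal_transformation_exists[of u "norm u *\<^sub>R ?e k"] by auto
    have "h u = h (f u)" using hinv[OF f(1)] by simp
    also have "\<dots> = (norm u)^2 * h (?e k)" using f(2) hscale by simp
    finally show ?thesis .
  qed
  have negT: "orthogonal_transformation (\<lambda>x::real^'n. - x)"
    using orthogonal_transformation_neg[of "\<lambda>x. x"] by simp
  have mpm: "(\<lambda>x::real^'n. (max 0 (x \<bullet> u))^2) \<in> borel_measurable borel"
    by (intro borel_measurable_continuous_onI continuous_intros)
  have mpb: "\<bar>(max 0 (x \<bullet> u))^2\<bar> \<le> (norm u)^2" if "norm x \<le> 1" for x :: "real^'n"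
  proof -
    have "\<bar>(max 0 (x \<bullet> u))^2\<bar> \<le> \<bar>(x \<bullet> u)^2\<bar>"
      by (cases "x \<bullet> u \<ge> 0") (auto simp: max_def)
    then show ?thesis using sqb[OF that, of u] by linarith
  qed
  have refl: "(\<integral>\<omega>. (max 0 (Y \<omega> \<bullet> u))^2 \<partial>M) = (\<integral>\<omega>. (max 0 (- (Y \<omega> \<bullet> u)))^2 \<partial>M)"
    using inv[OF negT mpm] by simp
  have i1: "integrable M (\<lambda>\<omega>. (max 0 (Y \<omega> \<bullet> u))^2)" by (rule intg[OF mpm mpb])
  have i2: "integrable M (\<lambda>\<omega>. (max 0 (- (Y \<omega> \<bullet> u)))^2)"
  proof -
    have mpm2: "(\<lambda>x::real^'n. (max 0 (- (x \<bullet> u)))^2) \<in> borel_measurable borel"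
      by (intro borel_measurable_continuous_onI continuous_intros)
    have mpb2: "\<bar>(max 0 (- (x \<bullet> u)))^2\<bar> \<le> (norm u)^2" if "norm x \<le> 1" for x :: "real^'n"
      using mpb[of "-x"] that by simp
    show ?thesis by (rule intg[OF mpm2 mpb2])
  qed
  have pw: "(max 0 t)^2 + (max 0 (- t))^2 = t^2" for t :: real
    by (cases "t \<ge> 0") (auto simp: max_def)
  have "2 * (\<integral>\<omega>. (max 0 (Y \<omega> \<bullet> u))^2 \<partial>M) =
        (\<integral>\<omega>. (max 0 (Y \<omega> \<bullet> u))^2 \<partial>M) + (\<integral>\<omega>. (max 0 (- (Y \<omega> \<bullet> u)))^2 \<partial>M)"
    using refl by simp
  also have "\<dots> = (\<integral>\<omega>. (max 0 (Y \<omega> \<bullet> u))^2 + (max 0 (- (Y \<omega> \<bullet> u)))^2 \<partial>M)"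
    by (rule Bochner_Integration.integral_add[OF i1 i2, symmetric])
  also have "\<dots> = h u" unfolding h_def pw ..
  finally have two: "2 * (\<integral>\<omega>. (max 0 (Y \<omega> \<bullet> u))^2 \<partial>M) = h u" .
  have cpos: "real CARD('n) > 0" by simp
  have hk': "h (?e k) = 1 / real CARD('n)" using hk cpos by (simp add: eq_divide_eq mult.commute)
  have "(\<integral>\<omega>. (max 0 (Y \<omega> \<bullet> u))^2 \<partial>M) = h u / 2" using two by linarith
  also have "\<dots> = (norm u)^2 * h (?e k) / 2" using hu by simp
  also have "\<dots> = (norm u)^2 / (2 * real CARD('n))" unfolding hk' by simp
  finally show ?thesis .
qed


theorem theorem1:
  fixes M :: "'s measure" and R :: "'s \<Rightarrow> real^'n^'m" and u :: "real^'n"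
  assumes "prob_space M"
    and "CARD('n) > 1"
    and "R \<in> borel_measurable M"
    and "(\<exists>P :: (real^'n) measure. isotropic P \<and>
            prob_space.indep_vars M (\<lambda>_. borel) (\<lambda>i \<omega>. R \<omega> $ i) UNIV \<and>
            (\<forall>i. distr M borel (\<lambda>\<omega>. R \<omega> $ i) = P))
       \<or> ((AE \<omega> in M. orthonormal_rows (rownormalize (R \<omega>))) \<and>
          (\<forall>Q :: real^'n^'n. orthogonal_matrix Q \<longrightarrow>
              distr M borel (\<lambda>\<omega>. rownormalize (R \<omega>) ** Q) =
              distr M borel (\<lambda>\<omega>. rownormalize (R \<omega>))))"
  shows "prob_space.expectation M
           (\<lambda>\<omega>. (norm (relu_vec (sqrt (2 * real CARD('n) / real CARD('m)) *\<^sub>R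
                                    (rownormalize (R \<omega>) *v u))))\<^sup>2)
         = K_const CARD('n) * (norm u)\<^sup>2"
proof -
  interpret prob_space M by fact
  define c where "c = sqrt (2 * real CARD('n) / real CARD('m))"
  have c0: "c \<ge> 0" unfolding c_def by simp
  have c2: "c^2 = 2 * real CARD('n) / real CARD('m)" unfolding c_def by simp
  define Y where "Y i \<omega> = sgn (R \<omega> $ i)" for i \<omega>
  have Rm: "(\<lambda>\<omega>. R \<omega> $ i) \<in> borel_measurable M" for i
    using measurable_compose[OF assms(3) nth_meas] .
  have Ym: "Y i \<in> borel_measurable M" for i
    unfolding Y_def using measurable_compose[OF Rm borel_measurable_sgn] .
  have Yb: "norm (Y i \<omega>) \<le> 1" for i \<omega> by (simp add: Y_def norm_sgn)
  have A: "rownormalize (R \<omega>) $ i = Y i \<omega>" for \<omega> i by (simp add: rn_nth Y_def)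
  have props: "(AE \<omega> in M. norm (Y i \<omega>) = 1) \<and>
     (\<forall>f (\<phi>::real^'n \<Rightarrow> real). orthogonal_transformation f \<longrightarrow> \<phi> \<in> borel_measurable borel \<longrightarrow>
                (\<integral>\<omega>. \<phi> (f (Y i \<omega>)) \<partial>M) = (\<integral>\<omega>. \<phi> (Y i \<omega>) \<partial>M))" for i
    using assms(4)
  proof
    assume "\<exists>P :: (real^'n) measure. isotropic P \<and>
            prob_space.indep_vars M (\<lambda>_. borel) (\<lambda>i \<omega>. R \<omega> $ i) UNIV \<and>
            (\<forall>i. distr M borel (\<lambda>\<omega>. R \<omega> $ i) = P)"
    then obtain P :: "(real^'n) measure" where iso: "isotropic P" and dP: "distr M borel (\<lambda>\<omega>. R \<omega> $ i) = P"
      by blast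
    have sP: "sets P = sets borel" and invP: "\<And>f. orthogonal_transformation f \<Longrightarrow> distr P borel f = P"
      and P0: "emeasure P {0} = 0" using iso unfolding isotropic_def by auto
    have "AE x in P. x \<noteq> 0"
      by (rule AE_I'[of "{0}"]) (use P0 sP in auto)
    then have "AE x in distr M borel (\<lambda>\<omega>. R \<omega> $ i). x \<noteq> 0" by (subst dP)
    then have "AE \<omega> in M. R \<omega> $ i \<noteq> 0"
      by (subst (asm) AE_distr_iff[OF Rm]) auto
    then have AE1: "AE \<omega> in M. norm (Y i \<omega>) = 1"
      by eventually_elim (simp add: Y_def norm_sgn)
    have INV: "(\<integral>\<omega>. \<phi> (f (Y i \<omega>)) \<partial>M) = (\<integral>\<omega>. \<phi> (Y i \<omega>) \<partial>M)"
      if f: "orthogonal_transformation f" and \<phi>: "\<phi> \<in> borel_measurable borel" for f and \<phi> :: "real^'n \<Rightarrow> real"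
    proof -
      have fm: "f \<in> borel_measurable borel" by (rule orth_meas[OF f])
      have fmP: "f \<in> measurable P borel" by (subst measurable_cong_sets[OF sP refl]) (rule fm)
      have m1: "(\<lambda>x. \<phi> (sgn (f x))) \<in> borel_measurable borel"
        using measurable_compose[OF measurable_compose[OF fm borel_measurable_sgn] \<phi>] .
      have m2: "(\<lambda>x. \<phi> (sgn x)) \<in> borel_measurable borel"
        using measurable_compose[OF borel_measurable_sgn \<phi>] .
      have "(\<integral>\<omega>. \<phi> (f (Y i \<omega>)) \<partial>M) = (\<integral>\<omega>. \<phi> (sgn (f (R \<omega> $ i))) \<partial>M)"
        by (simp add: Y_def orth_sgn[OF f])
      also have "\<dots> = integral\<^sup>L (distr M borel (\<lambda>\<omega>. R \<omega> $ i)) (\<lambda>x. \<phi> (sgn (f x)))"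
        by (rule integral_distr[OF Rm m1, symmetric])
      also have "\<dots> = integral\<^sup>L P (\<lambda>x. \<phi> (sgn (f x)))" by (simp add: dP)
      also have "\<dots> = integral\<^sup>L (distr P borel f) (\<lambda>x. \<phi> (sgn x))"
        by (rule integral_distr[OF fmP m2, symmetric])
      also have "\<dots> = integral\<^sup>L P (\<lambda>x. \<phi> (sgn x))" by (simp add: invP[OF f])
      also have "\<dots> = integral\<^sup>L (distr M borel (\<lambda>\<omega>. R \<omega> $ i)) (\<lambda>x. \<phi> (sgn x))" by (simp add: dP)
      also have "\<dots> = (\<integral>\<omega>. \<phi> (Y i \<omega>) \<partial>M)"
        unfolding Y_def by (rule integral_distr[OF Rm m2])
      finally show ?thesis .
    qed
    show ?thesis using AE1 INV by blast
  next
    assume "(AE \<omega> in M. orthonormal_rows (rownormalize (R \<omega>))) \<and>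
          (\<forall>Q :: real^'n^'n. orthogonal_matrix Q \<longrightarrow>
              distr M borel (\<lambda>\<omega>. rownormalize (R \<omega>) ** Q) =
              distr M borel (\<lambda>\<omega>. rownormalize (R \<omega>)))"
    then have AEo: "AE \<omega> in M. orthonormal_rows (rownormalize (R \<omega>))"
      and invQ: "\<And>Q :: real^'n^'n. orthogonal_matrix Q \<Longrightarrow>
              distr M borel (\<lambda>\<omega>. rownormalize (R \<omega>) ** Q) =
              distr M borel (\<lambda>\<omega>. rownormalize (R \<omega>))" by auto
    have AE1: "AE \<omega> in M. norm (Y i \<omega>) = 1"
      using AEo by eventually_elim (simp add: orthonormal_rows_def norm_eq_1 A[symmetric])
    have Am: "(\<lambda>\<omega>. rownormalize (R \<omega>)) \<in> borel_measurable M"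
      by (rule vec_meas) (simp add: A Ym)
    have INV: "(\<integral>\<omega>. \<phi> (f (Y i \<omega>)) \<partial>M) = (\<integral>\<omega>. \<phi> (Y i \<omega>) \<partial>M)"
      if f: "orthogonal_transformation f" and \<phi>: "\<phi> \<in> borel_measurable borel" for f and \<phi> :: "real^'n \<Rightarrow> real"
    proof -
      define Q where "Q = transpose (matrix f)"
      have lf: "linear f" using f by (rule orthogonal_transformation_linear)
      have Q: "orthogonal_matrix Q" unfolding Q_def using f orthogonal_transformation_matrix by auto
      have row: "(rownormalize (R \<omega>) ** Q) $ j = f (Y j \<omega>)" for \<omega> j
        unfolding Q_def rowQ[OF lf] A ..
      have fm: "f \<in> borel_measurable borel" by (rule orth_meas[OF f])
      have AQm: "(\<lambda>\<omega>. rownormalize (R \<omega>) ** Q) \<in> borel_measurable M"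
        by (rule vec_meas) (simp add: row measurable_compose[OF Ym fm])
      have \<psi>: "(\<lambda>B::real^'n^'m. \<phi> (B $ i)) \<in> borel_measurable borel"
        using measurable_compose[OF nth_meas \<phi>] .
      have "(\<integral>\<omega>. \<phi> (f (Y i \<omega>)) \<partial>M) = (\<integral>\<omega>. \<phi> ((rownormalize (R \<omega>) ** Q) $ i) \<partial>M)"
        by (simp add: row)
      also have "\<dots> = integral\<^sup>L (distr M borel (\<lambda>\<omega>. rownormalize (R \<omega>) ** Q)) (\<lambda>B. \<phi> (B $ i))"
        by (rule integral_distr[OF AQm \<psi>, symmetric])
      also have "\<dots> = integral\<^sup>L (distr M borel (\<lambda>\<omega>. rownormalize (R \<omega>))) (\<lambda>B. \<phi> (B $ i))"
        by (simp add: invQ[OF Q])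
      also have "\<dots> = (\<integral>\<omega>. \<phi> (rownormalize (R \<omega>) $ i) \<partial>M)"
        by (rule integral_distr[OF Am \<psi>])
      also have "\<dots> = (\<integral>\<omega>. \<phi> (Y i \<omega>) \<partial>M)" by (simp add: A)
      finally show ?thesis .
    qed
    show ?thesis using AE1 INV by blast
  qed
  have each: "(\<integral>\<omega>. (max 0 (Y i \<omega> \<bullet> u))^2 \<partial>M) = (norm u)^2 / (2 * real CARD('n))" for i
    using props[of i] by (intro key[OF assms(1) Ym Yb]) auto
  have intY: "integrable M (\<lambda>\<omega>. c^2 * (max 0 (Y i \<omega> \<bullet> u))^2)" for i
  proof (rule integrable_const_bound[where B="c^2 * (norm u)^2"])
    show "(\<lambda>\<omega>. c^2 * (max 0 (Y i \<omega> \<bullet> u))^2) \<in> borel_measurable M"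
    proof -
      have g: "(\<lambda>x::real^'n. c^2 * (max 0 (x \<bullet> u))^2) \<in> borel_measurable borel"
        by (intro borel_measurable_continuous_onI continuous_intros)
      show ?thesis using measurable_compose[OF Ym g] .
    qed
    show "AE \<omega> in M. norm (c^2 * (max 0 (Y i \<omega> \<bullet> u))^2) \<le> c^2 * (norm u)^2"
    proof (intro AE_I2)
      fix \<omega>
      have "\<bar>Y i \<omega> \<bullet> u\<bar> \<le> norm (Y i \<omega>) * norm u" by (rule Cauchy_Schwarz_ineq2)
      also have "\<dots> \<le> norm u" using Yb[of i \<omega>] by (simp add: mult_left_le_one_le)
      finally have "\<bar>max 0 (Y i \<omega> \<bullet> u)\<bar> \<le> norm u" by linarith
      then have "\<bar>max 0 (Y i \<omega> \<bullet> u)\<bar>^2 \<le> (norm u)^2" by (rule power_mono[OF _ abs_ge_zero])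
      then have "(max 0 (Y i \<omega> \<bullet> u))^2 \<le> (norm u)^2" by simp
      then show "norm (c^2 * (max 0 (Y i \<omega> \<bullet> u))^2) \<le> c^2 * (norm u)^2"
        by (simp add: mult_left_mono)
    qed
  qed
  have "prob_space.expectation M
           (\<lambda>\<omega>. (norm (relu_vec (sqrt (2 * real CARD('n) / real CARD('m)) *\<^sub>R
                                    (rownormalize (R \<omega>) *v u))))\<^sup>2)
        = (\<integral>\<omega>. (\<Sum>i\<in>UNIV. c^2 * (max 0 (Y i \<omega> \<bullet> u))^2) \<partial>M)"
    unfolding c_def[symmetric] integrand[OF c0] A ..
  also have "\<dots> = (\<Sum>i\<in>UNIV. (\<integral>\<omega>. c^2 * (max 0 (Y i \<omega> \<bullet> u))^2 \<partial>M))"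
    by (rule Bochner_Integration.integral_sum[where I=UNIV and M=M and f="\<lambda>i \<omega>. c^2 * (max 0 (Y i \<omega> \<bullet> u))^2"]) (rule intY)
  also have "\<dots> = (\<Sum>i\<in>(UNIV::'m set). c^2 * ((norm u)^2 / (2 * real CARD('n))))" by (simp add: each)
  also have "\<dots> = (norm u)^2" using c2 by simp
  also have "\<dots> = K_const CARD('n) * (norm u)\<^sup>2" using K_one[of "CARD('n)"] assms(2) by simp
  finally show ?thesis .
qed

end
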